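(* Assume the standard setting described in the context with $R\equiv0$, and assume in addition that for every continuous $\phi:\mathbb{R}^{V_0}\to\mathbb{R}$ and every $\delta\in(0,\infty)$ one has $\mathbb{P}(\|f_{\mathbf M}-\phi\|_{\mathbb{P}_X}<\delta)>0$. Then for every non-empty open set $U\subseteq\mathcal{E}_P^{(0,0,1)}(\mathcal{X})$, \[ \mathbb{P}\bigl(\exists\,\theta\in U:\ \theta\text{ is a local minimum of }J_{\mathbf M}\bigr)>0. \]
   Context: Shallow network: finite pairwise disjoint $V_0,V_1,V_2$, activation $\psi$; $E=(V_0\times V_1)\cup(V_1\times V_2)$; $\Theta=\mathbb{R}^E\times\mathbb{R}^{V_1\cup V_2}$, $\theta=(w,\beta)$; response $(\Psi_\theta(x))_l=\beta_l+\sum_{j\in V_1}\psi(\beta_j+\sum_{i\in V_0}x_iw_{ij})w_{jl}$; $w_{j\bullet}=(w_{jl})_{l\in V_2}$. Standard setting: $\#V_2=1$, $\psi$ real-analytic; $\mathbb{P}_X$ on $\mathbb{R}^{V_0}$ with compact support $\mathcal{X}$; measurable space $\mathbb{M}$, kernel $K$ from $\mathbb{M}\times\mathbb{R}^{V_0}$ to $\mathbb{R}^{V_2}$; for $\mathbf m\in\mathbb{M}$, under $\mathbb{P}_{\mathbf m}$: $X\sim\mathbb{P}_X$, $\mathbb{P}_{\mathbf m}(Y\in B\mid X)=K(\mathbf m,X;B)$, $\mathbb{E}_{\mathbf m}[\|Y\|^2]<\infty$; target $f_{\mathbf m}(x)=\int y\,K(\mathbf m,x;dy)$; $\mathbf M$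 an $\mathbb{M}$-valued random variable such that for every continuous $\phi$, $\int\phi f_{\mathbf M}\,d\mathbb{P}_X$ is Gaussian with strictly positive variance whenever $\phi\not\equiv0$ on $\mathcal{X}$. Cost $J_{\mathbf m}(\theta)=\mathbb{E}_{\mathbf m}[(\Psi_\theta(X)-Y)^2]+R(\theta)$ with $R$ real-analytic convex (here $R\equiv0$). $\|g\|_{\mathbb{P}_X}=(\int g^2\,d\mathbb{P}_X)^{1/2}$. $\mathcal{E}_P^{(0,0,1)}(\mathcal{X})$: parameters with $w_{k\bullet}\not\equiv0$ for all $k\in V_1$ such that the only constants $P^{(\emptyset)}$, $P^{(0)}_j$ and affine polynomials $P^{(1)}_j$ ($j\in V_1$) on $\mathbb{R}^{V_0}$ with $P^{(\emptyset)}+\sum_{j\in V_1}\bigl(P_j^{(0)}\psi(\beta_j+\sum_ix_iw_{ij})+P_j^{(1)}(x)\psi'(\beta_j+\sum_ix_iw_{ij})\bigr)=0$ for all $x\in\mathcal{X}$ are zero. *)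

theory Defs
  imports "HOL-Probability.Probability"
begin

text \<open>Shallow network with #V2 = 1.  Input neurons V0 = finite type 'i, hidden neurons
V1 = finite type 'j, a single output neuron.  A parameter
theta = (w_in, b_hid, w_out, b_out) collects the weights w_ij (i in V0, j in V1),
the hidden biases beta_j, the output weights w_jl and the output bias beta_l.\<close>

type_synonym ('i, 'j) param = "(real^('i \<times> 'j)) \<times> (real^'j) \<times> (real^'j) \<times> real"

definition real_analytic :: "(real \<Rightarrow> real) \<Rightarrow> bool" where
  "real_analytic f \<longleftrightarrow>
     (\<forall>x. \<exists>r>0. \<exists>a::nat \<Rightarrow> real. \<forall>y. \<bar>y - x\<bar> < r \<longrightarrow> (\<lambda>n. a n * (y - x) ^ n) sums f y)"

definition preact :: "('i::finite, 'j::finite) param \<Rightarrow> real^'i \<Rightarrow> 'j \<Rightarrow> real" where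
  "preact \<theta> x j = (fst (snd \<theta>)) $ j + (\<Sum>i\<in>UNIV. x $ i * (fst \<theta>) $ (i, j))"

definition response :: "(real \<Rightarrow> real) \<Rightarrow> ('i::finite, 'j::finite) param \<Rightarrow> real^'i \<Rightarrow> real" where
  "response \<psi> \<theta> x = snd (snd (snd \<theta>)) +
     (\<Sum>j\<in>UNIV. \<psi> (preact \<theta> x j) * (fst (snd (snd \<theta>))) $ j)"

definition msupport :: "'a::metric_space measure \<Rightarrow> 'a set" where
  "msupport M = {x. \<forall>e>0. emeasure M (ball x e) \<noteq> 0}"

definition EP001 :: "(real \<Rightarrow> real) \<Rightarrow> (real^'i) set \<Rightarrow> ('i::finite, 'j::finite) param set" where
  "EP001 \<psi> X = {\<theta>. (\<forall>k. (fst (snd (snd \<theta>))) $ k \<noteq> 0) \<and>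
      (\<forall>(c::real) (p0::'j \<Rightarrow> real) (c1::'j \<Rightarrow> real) (a1::'j \<Rightarrow> 'i \<Rightarrow> real).
         (\<forall>x\<in>X. c + (\<Sum>j\<in>UNIV. p0 j * \<psi> (preact \<theta> x j)
                    + (c1 j + (\<Sum>i\<in>UNIV. a1 j i * x $ i)) * deriv \<psi> (preact \<theta> x j)) = 0)
         \<longrightarrow> c = 0 \<and> (\<forall>j. p0 j = 0) \<and> (\<forall>j. c1 j = 0) \<and> (\<forall>j i. a1 j i = 0))}"

definition target :: "('m \<Rightarrow> real^'i \<Rightarrow> real measure) \<Rightarrow> 'm \<Rightarrow> real^'i \<Rightarrow> real" where
  "target K m x = (\<integral>y. y \<partial>K m x)"

text \<open>cost J_m(theta) = E_m[(Psi_theta(X) - Y)^2] (R = 0), computed via the kernel\<close>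
definition cost :: "(real \<Rightarrow> real) \<Rightarrow> (real^'i) measure \<Rightarrow> ('m \<Rightarrow> real^'i \<Rightarrow> real measure)
    \<Rightarrow> 'm \<Rightarrow> ('i::finite, 'j::finite) param \<Rightarrow> real" where
  "cost \<psi> PX K m \<theta> =
     enn2real (\<integral>\<^sup>+x. (\<integral>\<^sup>+y. ennreal ((response \<psi> \<theta> x - y)\<^sup>2) \<partial>K m x) \<partial>PX)"

definition L2_norm :: "'a measure \<Rightarrow> ('a \<Rightarrow> real) \<Rightarrow> real" where
  "L2_norm P g = sqrt (\<integral>x. (g x)\<^sup>2 \<partial>P)"

definition is_local_min :: "('a::metric_space \<Rightarrow> real) \<Rightarrow> 'a \<Rightarrow> bool" where
  "is_local_min J \<theta> \<longleftrightarrow> (\<exists>e>0. \<forall>\<theta>'. dist \<theta>' \<theta> < e \<longrightarrow> J \<theta> \<le> J \<theta>')"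

end

theory Submission
  imports Defs
begin

lemma analytic_deriv:
  assumes "real_analytic \<psi>"
  shows "(\<psi> has_real_derivative deriv \<psi> x) (at x)"
proof -
  obtain r a where r: "r > 0" and a: "\<And>y. \<bar>y - x\<bar> < r \<Longrightarrow> (\<lambda>n. a n * (y - x) ^ n) sums \<psi> y"
    using assms unfolding real_analytic_def by blast
  have sm: "summable (\<lambda>n. a n * z ^ n)" if "norm z < r" for z :: real
    using a[of "x + z"] that by (auto simp: sums_iff)
  have d0: "((\<lambda>z. \<Sum>n. a n * z^n) has_field_derivative (\<Sum>n. diffs a n * 0^n)) (at 0)"
    by (rule termdiffs_strong'[of r]) (use sm r in auto)
  have d1: "((\<lambda>y. \<Sum>n. a n * (y - x)^n) has_field_derivative (\<Sum>n. diffs a n * 0^n)) (at x)"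
  proof -
    have d0': "((\<lambda>z. \<Sum>n. a n * z^n) has_field_derivative (\<Sum>n. diffs a n * 0^n)) (at ((\<lambda>y. y - x) x))"
      using d0 by simp
    have "((\<lambda>y. y - x) has_field_derivative 1) (at x)" by (auto intro!: derivative_eq_intros)
    from DERIV_chain2[OF d0' this] show ?thesis by simp
  qed
  have "(\<psi> has_field_derivative (\<Sum>n. diffs a n * 0^n)) (at x)"
    apply (rule has_field_derivative_transform_within_open[OF d1, of "ball x r"])
    using r a by (auto simp: dist_real_def sums_iff abs_minus_commute)
  then show ?thesis
    using DERIV_deriv_iff_real_differentiable real_differentiable_def by blast
qed

lemma support_AE:
  fixes PX :: "'a::{metric_space,second_countable_topology} measure"
  assumes sets: "sets PX = sets borel"
  shows "AE x in PX. x \<in> msupport PX"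
proof -
  define F where "F = {ball x e | x e. e > 0 \<and> emeasure PX (ball x e) = 0}"
  obtain F' where F': "F' \<subseteq> F" "countable F'" "\<Union>F' = \<Union>F"
    by (rule Lindelof[of F]) (auto simp: F_def)
  have null: "S \<in> null_sets PX" if S: "S \<in> F" for S
  proof -
    obtain x e where "S = ball x e" "emeasure PX (ball x e) = 0" using S unfolding F_def by blast
    moreover have "ball x e \<in> sets PX" using sets by simp
    ultimately show ?thesis by (simp add: null_sets_def)
  qed
  have "(\<Union>S\<in>F'. S) \<in> null_sets PX"
    by (rule null_sets_UN') (use F' null in auto)
  moreover have "{x \<in> space PX. x \<notin> msupport PX} \<subseteq> (\<Union>S\<in>F'. S)"
  proof
    fix x assume "x \<in> {x \<in> space PX. x \<notin> msupport PX}"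
    then obtain e where "e > 0" "emeasure PX (ball x e) = 0"
      unfolding msupport_def by auto
    then have "ball x e \<in> F" unfolding F_def by blast
    then have "x \<in> \<Union>F" using \<open>e > 0\<close> by (metis UnionI centre_in_ball)
    then show "x \<in> (\<Union>S\<in>F'. S)" using F' by simp
  qed
  ultimately show ?thesis by (rule AE_I')
qed

lemma response_cont:
  assumes "continuous_on UNIV \<psi>"
  shows "continuous_on UNIV (\<lambda>p. response \<psi> (fst p) (snd p :: real^'i::finite) :: real)"
proof -
  have c: "isCont \<psi> x" for x using assms by (simp add: continuous_on_eq_continuous_at)
  show ?thesis unfolding response_def preact_def
    by (intro continuous_at_imp_continuous_on ballI continuous_intros continuous_at_compose[OF _ c, unfolded o_def])
qed

definition dresp :: "(real \<Rightarrow> real) \<Rightarrow> ('i::finite, 'j::finite) param \<Rightarrow> real^'i \<Rightarrow> ('i, 'j) param \<Rightarrow> real" where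
  "dresp \<psi> \<theta> x v = snd (snd (snd v)) + (\<Sum>j\<in>UNIV. \<psi> (preact \<theta> x j) * (fst (snd (snd v))) $ j
     + deriv \<psi> (preact \<theta> x j) * ((fst (snd v)) $ j + (\<Sum>i\<in>UNIV. x $ i * (fst v) $ (i, j))) * (fst (snd (snd \<theta>))) $ j)"

lemma bl_comp_nth: "bounded_linear g \<Longrightarrow> bounded_linear (\<lambda>x. g x $ k)"
  using bounded_linear_compose[OF bounded_linear_vec_nth, of g k] by (simp add: o_def)

lemma hd_fst_nth: "((\<lambda>\<theta>::('i::finite,'j::finite) param. fst \<theta> $ k) has_derivative (\<lambda>\<theta>. fst \<theta> $ k)) F"
  by (intro bounded_linear_imp_has_derivative bl_comp_nth bounded_linear_fst)
lemma hd_fsnd_nth: "((\<lambda>\<theta>::('i::finite,'j::finite) param. fst (snd \<theta>) $ k) has_derivative (\<lambda>\<theta>. fst (snd \<theta>) $ k)) F"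
  by (intro bounded_linear_imp_has_derivative bl_comp_nth bounded_linear_compose[OF bounded_linear_fst bounded_linear_snd, unfolded o_def])
lemma hd_fssnd_nth: "((\<lambda>\<theta>::('i::finite,'j::finite) param. fst (snd (snd \<theta>)) $ k) has_derivative (\<lambda>\<theta>. fst (snd (snd \<theta>)) $ k)) F"
  by (intro bounded_linear_imp_has_derivative bl_comp_nth bounded_linear_compose[OF bounded_linear_fst bounded_linear_compose[OF bounded_linear_snd bounded_linear_snd], unfolded o_def])
lemma hd_sss: "((\<lambda>\<theta>::('i::finite,'j::finite) param. snd (snd (snd \<theta>))) has_derivative (\<lambda>\<theta>. snd (snd (snd \<theta>)))) F"
  by (intro bounded_linear_imp_has_derivative bounded_linear_compose[OF bounded_linear_snd bounded_linear_compose[OF bounded_linear_snd bounded_linear_snd], unfolded o_def])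

lemma response_deriv:
  assumes "\<And>x. (\<psi> has_real_derivative deriv \<psi> x) (at x)"
  shows "((\<lambda>\<theta>. response \<psi> \<theta> x) has_derivative dresp \<psi> \<theta>0 x) (at \<theta>0)"
proof -
  have "((\<lambda>\<theta>. preact \<theta> x j) has_derivative (\<lambda>v. (fst (snd v)) $ j + (\<Sum>i\<in>UNIV. x $ i * (fst v) $ (i, j)))) (at \<theta>0)" for j
    unfolding preact_def by (auto intro!: derivative_eq_intros hd_fst_nth hd_fsnd_nth)
  note pd = this
  have psid: "((\<lambda>\<theta>. \<psi> (preact \<theta> x j)) has_derivative (\<lambda>v. deriv \<psi> (preact \<theta>0 x j) * ((fst (snd v)) $ j + (\<Sum>i\<in>UNIV. x $ i * (fst v) $ (i, j))))) (at \<theta>0)" for j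
    using has_derivative_compose[OF pd[of j] assms[of "preact \<theta>0 x j", unfolded has_field_derivative_def]]
    by (simp add: o_def mult.commute)
  show ?thesis unfolding response_def dresp_def[abs_def]
    apply (rule has_derivative_eq_rhs)
     apply (rule has_derivative_add[OF hd_sss has_derivative_sum])
     apply (rule has_derivative_mult[OF psid hd_fssnd_nth])
    apply (auto simp: algebra_simps)
    done
qed

lemma dresp_inj:
  assumes E: "\<theta>0 \<in> EP001 \<psi> S" and z: "\<forall>x\<in>S. dresp \<psi> \<theta>0 x v = 0"
  shows "v = 0"
proof -
  let ?w = "fst (snd (snd \<theta>0))"
  have w: "\<And>k. ?w $ k \<noteq> 0" and L: "\<And>c p0 c1 a1. (\<forall>x\<in>S. c + (\<Sum>j\<in>UNIV. p0 j * \<psi> (preact \<theta>0 x j)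
                    + (c1 j + (\<Sum>i\<in>UNIV. a1 j i * x $ i)) * deriv \<psi> (preact \<theta>0 x j)) = 0)
         \<Longrightarrow> c = 0 \<and> (\<forall>j. p0 j = 0) \<and> (\<forall>j. c1 j = 0) \<and> (\<forall>j i. a1 j i = 0)"
    using E unfolding EP001_def by auto
  have "snd (snd (snd v)) = 0 \<and> (\<forall>j. fst (snd (snd v)) $ j = 0) \<and> (\<forall>j. fst (snd v) $ j * ?w $ j = 0)
     \<and> (\<forall>j i. fst v $ (i, j) * ?w $ j = 0)"
  proof (rule L, intro ballI)
    fix x assume "x \<in> S"
    then have "dresp \<psi> \<theta>0 x v = 0" using z by auto
    moreover have "dresp \<psi> \<theta>0 x v = snd (snd (snd v)) + (\<Sum>j\<in>UNIV. fst (snd (snd v)) $ j * \<psi> (preact \<theta>0 x j)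
                    + (fst (snd v) $ j * ?w $ j + (\<Sum>i\<in>UNIV. fst v $ (i, j) * ?w $ j * x $ i)) * deriv \<psi> (preact \<theta>0 x j))"
      unfolding dresp_def
      by (intro arg_cong2[where f="(+)"] refl sum.cong) (auto simp: algebra_simps sum_distrib_left sum_distrib_right)
    ultimately show "snd (snd (snd v)) + (\<Sum>j\<in>UNIV. fst (snd (snd v)) $ j * \<psi> (preact \<theta>0 x j)
                    + (fst (snd v) $ j * ?w $ j + (\<Sum>i\<in>UNIV. fst v $ (i, j) * ?w $ j * x $ i)) * deriv \<psi> (preact \<theta>0 x j)) = 0"
      by simp
  qed
  then have "snd (snd (snd v)) = 0" "fst (snd (snd v)) = 0" "fst (snd v) = 0" "fst v = 0"
    using w by (auto simp: vec_eq_iff)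
  then show "v = 0" by (simp add: prod_eq_iff)
qed

lemma local_inj:
  assumes d: "\<And>x. (\<psi> has_real_derivative deriv \<psi> x) (at x)"
    and E: "\<theta>0 \<in> EP001 \<psi> S"
  shows "\<exists>r0>0. \<forall>\<theta>. 0 < dist \<theta> \<theta>0 \<and> dist \<theta> \<theta>0 < r0 \<longrightarrow> (\<exists>x\<in>S. response \<psi> \<theta> x \<noteq> response \<psi> \<theta>0 x)"
proof (rule ccontr)
  assume "\<not> ?thesis"
  then have "\<forall>n. \<exists>\<theta>. 0 < dist \<theta> \<theta>0 \<and> dist \<theta> \<theta>0 < 1 / Suc n \<and> (\<forall>x\<in>S. response \<psi> \<theta> x = response \<psi> \<theta>0 x)"
    by (metis of_nat_0_less_iff zero_less_Suc zero_less_divide_1_iff)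
  then obtain T where T: "\<And>n. 0 < dist (T n) \<theta>0" "\<And>n. dist (T n) \<theta>0 < 1 / Suc n"
    "\<And>n x. x \<in> S \<Longrightarrow> response \<psi> (T n) x = response \<psi> \<theta>0 x"
    by metis
  define h where "h n = T n - \<theta>0" for n
  define u where "u n = (1 / norm (h n)) *\<^sub>R h n" for n
  have hnz: "h n \<noteq> 0" for n using T(1)[of n] by (simp add: h_def dist_norm)
  have u1: "u n \<in> sphere 0 1" for n using hnz by (simp add: u_def)
  have h0: "h \<longlonglongrightarrow> 0"
  proof -
    have "(\<lambda>n. dist (T n) \<theta>0) \<longlonglongrightarrow> 0"
      by (rule tendsto_sandwich[where f="\<lambda>_. 0" and h="\<lambda>n. 1 / Suc n"])
         (auto intro!: always_eventually less_imp_le T(2) LIMSEQ_Suc[OF lim_inverse_n'] simp del: of_nat_Suc)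
    then show ?thesis unfolding h_def by (simp add: dist_norm tendsto_norm_zero_iff LIM_zero)
  qed
  obtain l r where l: "l \<in> sphere 0 1" and r: "strict_mono r" and ul: "(u \<circ> r) \<longlonglongrightarrow> l"
    using compact_imp_seq_compact[OF compact_sphere, of 0 1] u1 unfolding seq_compact_def by metis
  have "dresp \<psi> \<theta>0 x l = 0" if x: "x \<in> S" for x
  proof -
    let ?D = "dresp \<psi> \<theta>0 x"
    have hd: "((\<lambda>\<theta>. response \<psi> \<theta> x) has_derivative ?D) (at \<theta>0)"
      by (rule response_deriv[OF d])
    then have bl: "bounded_linear ?D" by (rule has_derivative_bounded_linear)
    have lim0: "((\<lambda>k. norm (response \<psi> (\<theta>0 + k) x - response \<psi> \<theta>0 x - ?D k) / norm k) \<longlongrightarrow> 0) (at 0)"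
      using hd unfolding has_derivative_at by blast
    have hr: "filterlim (h \<circ> r) (at 0) sequentially"
      by (rule filterlim_atI) (use LIMSEQ_subseq_LIMSEQ[OF h0 r] hnz in auto)
    have "((\<lambda>n. norm (response \<psi> (\<theta>0 + (h \<circ> r) n) x - response \<psi> \<theta>0 x - ?D ((h \<circ> r) n)) / norm ((h \<circ> r) n)) \<longlongrightarrow> 0) sequentially"
      using filterlim_compose[OF lim0 hr] by (simp add: o_def)
    moreover have "norm (response \<psi> (\<theta>0 + (h \<circ> r) n) x - response \<psi> \<theta>0 x - ?D ((h \<circ> r) n)) / norm ((h \<circ> r) n)
        = norm (?D ((u \<circ> r) n))" for n
    proof -
      have "response \<psi> (\<theta>0 + (h \<circ> r) n) x = response \<psi> \<theta>0 x"
        using T(3)[OF x, of "r n"] by (simp add: h_def)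
      moreover have "?D ((u \<circ> r) n) = (1 / norm (h (r n))) * ?D (h (r n))"
        using linear_cmul[OF bounded_linear.linear[OF bl]] by (simp add: u_def)
      ultimately show ?thesis by (simp add: norm_mult divide_inverse mult.commute abs_mult)
    qed
    ultimately have A: "(\<lambda>n. norm (?D ((u \<circ> r) n))) \<longlonglongrightarrow> 0" by simp
    have B: "(\<lambda>n. norm (?D ((u \<circ> r) n))) \<longlonglongrightarrow> norm (?D l)"
      by (intro tendsto_norm bounded_linear.tendsto[OF bl] ul)
    from LIMSEQ_unique[OF B A] show ?thesis by simp
  qed
  then have "l = 0" by (intro dresp_inj[OF E]) auto
  with l show False by simp
qed



lemma cont_meas:
  assumes "sets PX = sets borel" "continuous_on UNIV (\<phi> :: 'a::topological_space \<Rightarrow> real)"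
  shows "\<phi> \<in> borel_measurable PX"
  using borel_measurable_continuous_onI[OF assms(2)] measurable_cong_sets[OF assms(1) refl] by blast

lemma cont_bound_AE:
  fixes PX :: "'a::{metric_space,second_countable_topology} measure"
  assumes sets: "sets PX = sets borel" and S: "compact (msupport PX)"
    and c: "continuous_on UNIV (\<phi> :: 'a \<Rightarrow> real)"
  obtains C where "AE x in PX. \<bar>\<phi> x\<bar> \<le> C"
proof -
  have "bounded (\<phi> ` msupport PX)"
    by (rule compact_imp_bounded, rule compact_continuous_image) (use c S continuous_on_subset in auto)
  then obtain C where "\<forall>x\<in>msupport PX. \<bar>\<phi> x\<bar> \<le> C" by (auto simp: bounded_iff)
  with support_AE[OF sets] have "AE x in PX. \<bar>\<phi> x\<bar> \<le> C" by (auto elim: AE_mp)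
  then show ?thesis by (rule that)
qed

lemma int_sq_diff:
  fixes PX :: "'a::{metric_space,second_countable_topology} measure"
  assumes P: "prob_space PX" and sets: "sets PX = sets borel" and S: "compact (msupport PX)"
    and c: "continuous_on UNIV (\<phi> :: 'a \<Rightarrow> real)"
    and f: "f \<in> borel_measurable PX" and fi: "integrable PX (\<lambda>x. (f x)\<^sup>2)"
  shows "integrable PX (\<lambda>x. (\<phi> x - f x)\<^sup>2)"
proof -
  interpret prob_space PX by (rule P)
  obtain C where C: "AE x in PX. \<bar>\<phi> x\<bar> \<le> C" using cont_bound_AE[OF sets S c] by blast
  have "integrable PX (\<lambda>x. 2 * C\<^sup>2 + 2 * (f x)\<^sup>2)" using fi by auto
  moreover have "(\<lambda>x. (\<phi> x - f x)\<^sup>2) \<in> borel_measurable PX"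
    using cont_meas[OF sets c] f by measurable
  moreover have "AE x in PX. norm ((\<phi> x - f x)\<^sup>2) \<le> norm (2 * C\<^sup>2 + 2 * (f x)\<^sup>2)"
    using C
  proof (rule AE_mp, intro AE_I2 impI)
    fix x assume "\<bar>\<phi> x\<bar> \<le> C"
    then have "(\<phi> x)\<^sup>2 \<le> C\<^sup>2" using power_mono[of "\<bar>\<phi> x\<bar>" C 2] by simp
    moreover have "(\<phi> x - f x)\<^sup>2 \<le> 2 * (\<phi> x)\<^sup>2 + 2 * (f x)\<^sup>2"
      by (smt (verit) sum_squares_ge_zero power2_diff power2_sum zero_le_power2)
    ultimately show "norm ((\<phi> x - f x)\<^sup>2) \<le> norm (2 * C\<^sup>2 + 2 * (f x)\<^sup>2)" by simp
  qed
  ultimately show ?thesis by (rule Bochner_Integration.integrable_bound)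
qed

lemma joint_cont_x:
  assumes "continuous_on UNIV (\<lambda>p. \<Phi> (fst p) (snd p) :: real)"
  shows "continuous_on UNIV (\<Phi> \<theta>)"
proof -
  have "continuous_on UNIV (\<lambda>x. (\<theta>, x))" by (intro continuous_intros)
  from continuous_on_compose2[OF assms this] show ?thesis by simp
qed

lemma joint_cont_t:
  assumes "continuous_on UNIV (\<lambda>p. \<Phi> (fst p) (snd p) :: real)"
  shows "continuous_on UNIV (\<lambda>\<theta>. \<Phi> \<theta> x)"
proof -
  have "continuous_on UNIV (\<lambda>\<theta>. (\<theta>, x))" by (intro continuous_intros)
  from continuous_on_compose2[OF assms this] show ?thesis by simp
qed

lemma F_cont:
  fixes PX :: "'a::{metric_space,second_countable_topology} measure"
    and \<Phi> :: "'b::metric_space \<Rightarrow> 'a \<Rightarrow> real"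
  assumes P: "prob_space PX" and sets: "sets PX = sets borel" and S: "compact (msupport PX)"
    and c: "continuous_on UNIV (\<lambda>p. \<Phi> (fst p) (snd p))"
    and K: "compact K"
    and g: "g \<in> borel_measurable PX" and gi: "integrable PX (\<lambda>x. (g x)\<^sup>2)"
  shows "continuous_on K (\<lambda>\<theta>. \<integral>x. (\<Phi> \<theta> x - g x)\<^sup>2 \<partial>PX)"
proof -
  interpret prob_space PX by (rule P)
  have "bounded ((\<lambda>p. \<Phi> (fst p) (snd p)) ` (K \<times> msupport PX))"
    by (rule compact_imp_bounded, rule compact_continuous_image) (use c S K continuous_on_subset compact_Times in auto)
  then obtain C where C: "\<And>\<theta> x. \<theta> \<in> K \<Longrightarrow> x \<in> msupport PX \<Longrightarrow> \<bar>\<Phi> \<theta> x\<bar> \<le> C"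
    by (force simp: bounded_iff)
  show ?thesis unfolding continuous_on_sequentially
  proof (intro allI ballI impI, elim conjE)
    fix T \<theta> assume \<theta>: "\<theta> \<in> K" and T: "\<forall>n. T n \<in> K" and lim: "T \<longlonglongrightarrow> \<theta>"
    have w: "integrable PX (\<lambda>x. 2 * C\<^sup>2 + 2 * (g x)\<^sup>2)" using gi by auto
    have "(\<lambda>n. \<integral>x. (\<Phi> (T n) x - g x)\<^sup>2 \<partial>PX) \<longlonglongrightarrow> (\<integral>x. (\<Phi> \<theta> x - g x)\<^sup>2 \<partial>PX)"
    proof (rule integral_dominated_convergence[OF _ _ w])
      show "(\<lambda>x. (\<Phi> \<theta> x - g x)\<^sup>2) \<in> borel_measurable PX"
        using cont_meas[OF sets joint_cont_x[OF c]] g by measurable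
      show "(\<lambda>x. (\<Phi> (T n) x - g x)\<^sup>2) \<in> borel_measurable PX" for n
        using cont_meas[OF sets joint_cont_x[OF c]] g by measurable
      show "AE x in PX. (\<lambda>n. (\<Phi> (T n) x - g x)\<^sup>2) \<longlonglongrightarrow> (\<Phi> \<theta> x - g x)\<^sup>2"
      proof (intro AE_I2 tendsto_intros)
        fix x
        have "isCont (\<lambda>\<theta>. \<Phi> \<theta> x) \<theta>"
          using joint_cont_t[OF c, of x] by (simp add: continuous_on_eq_continuous_at)
        then show "(\<lambda>n. \<Phi> (T n) x) \<longlonglongrightarrow> \<Phi> \<theta> x"
          using isCont_tendsto_compose[OF _ lim] by blast
      qed
      show "AE x in PX. norm ((\<Phi> (T n) x - g x)\<^sup>2) \<le> 2 * C\<^sup>2 + 2 * (g x)\<^sup>2" for n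
        using support_AE[OF sets]
      proof (rule AE_mp, intro AE_I2 impI)
        fix x assume "x \<in> msupport PX"
        then have "\<bar>\<Phi> (T n) x\<bar> \<le> C" using C T by blast
        then have "(\<Phi> (T n) x)\<^sup>2 \<le> C\<^sup>2" using power_mono[of "\<bar>\<Phi> (T n) x\<bar>" C 2] by simp
        moreover have "(\<Phi> (T n) x - g x)\<^sup>2 \<le> 2 * (\<Phi> (T n) x)\<^sup>2 + 2 * (g x)\<^sup>2"
          by (smt (verit) sum_squares_ge_zero power2_diff power2_sum zero_le_power2)
        ultimately show "norm ((\<Phi> (T n) x - g x)\<^sup>2) \<le> 2 * C\<^sup>2 + 2 * (g x)\<^sup>2" by simp
      qed
    qed
    then show "((\<lambda>\<theta>. \<integral>x. (\<Phi> \<theta> x - g x)\<^sup>2 \<partial>PX) \<circ> T) \<longlonglongrightarrow> (\<integral>x. (\<Phi> \<theta> x - g x)\<^sup>2 \<partial>PX)"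
      by (simp add: o_def)
  qed
qed

lemma pos_int:
  fixes PX :: "'a::{metric_space,second_countable_topology} measure"
  assumes sets: "sets PX = sets borel" and c: "continuous_on UNIV (h :: 'a \<Rightarrow> real)"
    and x0: "x0 \<in> msupport PX" "h x0 \<noteq> 0" and hi: "integrable PX (\<lambda>x. (h x)\<^sup>2)"
  shows "0 < (\<integral>x. (h x)\<^sup>2 \<partial>PX)"
proof (rule ccontr)
  assume "\<not> ?thesis"
  moreover have "0 \<le> (\<integral>x. (h x)\<^sup>2 \<partial>PX)" by simp
  ultimately have "(\<integral>x. (h x)\<^sup>2 \<partial>PX) = 0" by linarith
  then have ae: "AE x in PX. (h x)\<^sup>2 = 0" using integral_nonneg_eq_0_iff_AE[OF hi] by simp
  obtain e where e: "e > 0" "\<And>y. dist x0 y < e \<Longrightarrow> h y \<noteq> 0"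
    using continuous_at_avoid[of x0 h 0] c x0(2) by (auto simp: continuous_on_eq_continuous_at)
  have ae2: "AE x in PX. x \<notin> ball x0 e" using ae by (rule AE_mp) (auto intro!: AE_I2 dest: e(2))
  have sp: "space PX = UNIV" using sets_eq_imp_space_eq[OF sets] by simp
  have bs: "ball x0 e \<in> sets PX" using sets by simp
  have eq: "{x \<in> space PX. \<not> x \<notin> ball x0 e} = ball x0 e" using sp by auto
  have "emeasure PX (ball x0 e) = 0"
    using AE_iff_measurable[OF bs eq] ae2 by blast
  with x0(1) e(1) show False unfolding msupport_def by auto
qed

lemma key_min:
  fixes PX :: "'a::{metric_space,second_countable_topology} measure"
    and \<Phi> :: "'b::euclidean_space \<Rightarrow> 'a \<Rightarrow> real"
  assumes P: "prob_space PX" and sets: "sets PX = sets borel" and S: "compact (msupport PX)"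
    and c: "continuous_on UNIV (\<lambda>p. \<Phi> (fst p) (snd p))"
    and r: "r > 0"
    and sep: "\<And>\<theta>. dist \<theta>0 \<theta> = r \<Longrightarrow> \<exists>x\<in>msupport PX. \<Phi> \<theta> x \<noteq> \<Phi> \<theta>0 x"
  shows "\<exists>\<epsilon>>0. \<forall>g. g \<in> borel_measurable PX \<longrightarrow> integrable PX (\<lambda>x. (g x)\<^sup>2) \<longrightarrow>
      (\<integral>x. (g x - \<Phi> \<theta>0 x)\<^sup>2 \<partial>PX) < \<epsilon> \<longrightarrow>
      (\<exists>\<theta>s. dist \<theta>0 \<theta>s < r \<and> (\<exists>e>0. \<forall>\<theta>'. dist \<theta>' \<theta>s < e \<longrightarrow>
         (\<integral>x. (\<Phi> \<theta>s x - g x)\<^sup>2 \<partial>PX) \<le> (\<integral>x. (\<Phi> \<theta>' x - g x)\<^sup>2 \<partial>PX)))"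
proof -
  interpret prob_space PX by (rule P)
  have cx: "continuous_on UNIV (\<Phi> \<theta>)" for \<theta> by (rule joint_cont_x[OF c])
  have mx: "\<Phi> \<theta> \<in> borel_measurable PX" for \<theta> by (rule cont_meas[OF sets cx])
  have isq: "integrable PX (\<lambda>x. (\<Phi> \<theta> x - g x)\<^sup>2)"
    if "g \<in> borel_measurable PX" "integrable PX (\<lambda>x. (g x)\<^sup>2)" for g \<theta>
    by (rule int_sq_diff[OF P sets S cx that])
  have sq0: "integrable PX (\<lambda>x. (\<Phi> \<theta> x)\<^sup>2)" for \<theta>
    using isq[of "\<lambda>_. 0" \<theta>] by simp
  define G where "G \<theta> = (\<integral>x. (\<Phi> \<theta> x - \<Phi> \<theta>0 x)\<^sup>2 \<partial>PX)" for \<theta>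
  have Gc: "continuous_on (sphere \<theta>0 r) G"
    unfolding G_def by (rule F_cont[OF P sets S c compact_sphere mx sq0])
  have Gp: "0 < G \<theta>" if th: "\<theta> \<in> sphere \<theta>0 r" for \<theta>
  proof -
    obtain x0 where "x0 \<in> msupport PX" "\<Phi> \<theta> x0 \<noteq> \<Phi> \<theta>0 x0" using sep th by auto
    then show ?thesis unfolding G_def
      by (intro pos_int[OF sets]) (auto intro!: continuous_intros cx isq mx sq0)
  qed
  obtain m where m: "m > 0" "\<And>\<theta>. \<theta> \<in> sphere \<theta>0 r \<Longrightarrow> m \<le> G \<theta>"
  proof (cases "sphere \<theta>0 r = {}")
    case True then show ?thesis using that[of 1] by auto
  next
    case False
    from continuous_attains_inf[OF compact_sphere False Gc] obtain \<theta>m where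
      "\<theta>m \<in> sphere \<theta>0 r" "\<forall>y\<in>sphere \<theta>0 r. G \<theta>m \<le> G y" by blast
    then show ?thesis using that[of "G \<theta>m"] Gp by auto
  qed
  show ?thesis
  proof (intro exI[of _ "m / 4"] conjI allI impI)
    show "m / 4 > 0" using m by simp
    fix g assume gm: "g \<in> borel_measurable PX" and gi: "integrable PX (\<lambda>x. (g x)\<^sup>2)"
      and small: "(\<integral>x. (g x - \<Phi> \<theta>0 x)\<^sup>2 \<partial>PX) < m / 4"
    define F where "F \<theta> = (\<integral>x. (\<Phi> \<theta> x - g x)\<^sup>2 \<partial>PX)" for \<theta>
    have F0: "F \<theta>0 < m / 4" using small unfolding F_def by (simp add: power2_commute)
    have Fs: "F \<theta>0 < F \<theta>" if "\<theta> \<in> sphere \<theta>0 r" for \<theta>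
    proof -
      have "G \<theta> \<le> (\<integral>x. 2 * (\<Phi> \<theta> x - g x)\<^sup>2 + 2 * (\<Phi> \<theta>0 x - g x)\<^sup>2 \<partial>PX)"
        unfolding G_def
      proof (rule integral_mono)
        show "integrable PX (\<lambda>x. (\<Phi> \<theta> x - \<Phi> \<theta>0 x)\<^sup>2)" by (rule isq[OF mx sq0])
        show "integrable PX (\<lambda>x. 2 * (\<Phi> \<theta> x - g x)\<^sup>2 + 2 * (\<Phi> \<theta>0 x - g x)\<^sup>2)"
          using isq[OF gm gi] by auto
        show "(\<Phi> \<theta> x - \<Phi> \<theta>0 x)\<^sup>2 \<le> 2 * (\<Phi> \<theta> x - g x)\<^sup>2 + 2 * (\<Phi> \<theta>0 x - g x)\<^sup>2" for x
          by (smt (verit) sum_squares_ge_zero power2_diff power2_sum zero_le_power2)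
      qed
      also have "\<dots> = 2 * F \<theta> + 2 * F \<theta>0"
        unfolding F_def using isq[OF gm gi] by simp
      finally show ?thesis using m(2)[OF that] F0 by linarith
    qed
    have Fc: "continuous_on (cball \<theta>0 r) F"
      unfolding F_def by (rule F_cont[OF P sets S c compact_cball gm gi])
    have "cball \<theta>0 r \<noteq> {}" using r by auto
    from continuous_attains_inf[OF compact_cball this Fc] obtain \<theta>s where
      \<theta>s: "\<theta>s \<in> cball \<theta>0 r" "\<And>y. y \<in> cball \<theta>0 r \<Longrightarrow> F \<theta>s \<le> F y" by blast
    have "dist \<theta>0 \<theta>s \<noteq> r"
    proof
      assume "dist \<theta>0 \<theta>s = r"
      then have "F \<theta>0 < F \<theta>s" using Fs by simp
      moreover have "F \<theta>s \<le> F \<theta>0" using \<theta>s(2)[of \<theta>0] r by simp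
      ultimately show False by simp
    qed
    with \<theta>s(1) have lt: "dist \<theta>0 \<theta>s < r" by simp
    show "\<exists>\<theta>s. dist \<theta>0 \<theta>s < r \<and> (\<exists>e>0. \<forall>\<theta>'. dist \<theta>' \<theta>s < e \<longrightarrow>
         (\<integral>x. (\<Phi> \<theta>s x - g x)\<^sup>2 \<partial>PX) \<le> (\<integral>x. (\<Phi> \<theta>' x - g x)\<^sup>2 \<partial>PX))"
    proof (intro exI conjI allI impI)
      show "dist \<theta>0 \<theta>s < r" by (rule lt)
      show "r - dist \<theta>0 \<theta>s > 0" using lt by simp
      fix \<theta>' assume "dist \<theta>' \<theta>s < r - dist \<theta>0 \<theta>s"
      then have "\<theta>' \<in> cball \<theta>0 r" using dist_triangle[of \<theta>0 \<theta>' \<theta>s] by (simp add: dist_commute)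
      from \<theta>s(2)[OF this] show "(\<integral>x. (\<Phi> \<theta>s x - g x)\<^sup>2 \<partial>PX) \<le> (\<integral>x. (\<Phi> \<theta>' x - g x)\<^sup>2 \<partial>PX)"
        unfolding F_def .
    qed
  qed
qed



lemma abs_le_1_sq: "\<bar>x::real\<bar> \<le> 1 + x\<^sup>2"
proof (cases "\<bar>x\<bar> \<le> 1")
  case True then show ?thesis using zero_le_power2[of x] by linarith
next
  case False
  then have "\<bar>x\<bar> * 1 \<le> \<bar>x\<bar> * \<bar>x\<bar>" by (intro mult_left_mono) auto
  moreover have "\<bar>x\<bar> * \<bar>x\<bar> = x\<^sup>2" by (simp add: power2_eq_square)
  ultimately show ?thesis by linarith
qed

lemma point_kernel:
  fixes N :: "real measure"
  assumes Np: "prob_space N" and Ns: "sets N = sets borel"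
    and fin: "(\<integral>\<^sup>+y. ennreal (y\<^sup>2) \<partial>N) < \<infinity>"
  shows "(\<integral>\<^sup>+y. ennreal (y\<^sup>2) \<partial>N) = ennreal (\<integral>y. y\<^sup>2 \<partial>N)"
    and "(\<integral>y. y \<partial>N)\<^sup>2 \<le> (\<integral>y. y\<^sup>2 \<partial>N)"
    and "\<And>a. (\<integral>\<^sup>+y. ennreal ((a - y)\<^sup>2) \<partial>N) =
           ennreal ((a - (\<integral>y. y \<partial>N))\<^sup>2) + ennreal ((\<integral>y. y\<^sup>2 \<partial>N) - (\<integral>y. y \<partial>N)\<^sup>2)"
proof -
  interpret prob_space N by (rule Np)
  have mid: "(\<lambda>y::real. y) \<in> borel_measurable N" using Ns by (simp add: measurable_cong_sets[OF Ns refl])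
  have i2: "integrable N (\<lambda>y. y\<^sup>2)"
    by (rule integrableI_nonneg) (use fin mid in auto)
  have i1: "integrable N (\<lambda>y. y)"
  proof (rule Bochner_Integration.integrable_bound[of _ "\<lambda>y. 1 + y\<^sup>2"])
    show "integrable N (\<lambda>y. 1 + y\<^sup>2)" using i2 by simp
    show "(\<lambda>y. y) \<in> borel_measurable N" by (rule mid)
    show "AE x in N. norm x \<le> norm (1 + x\<^sup>2)"
      by (intro AE_I2) (use abs_le_1_sq in \<open>simp add: abs_of_nonneg add_nonneg_nonneg\<close>)
  qed
  show e2: "(\<integral>\<^sup>+y. ennreal (y\<^sup>2) \<partial>N) = ennreal (\<integral>y. y\<^sup>2 \<partial>N)"
    by (rule nn_integral_eq_integral[OF i2]) auto
  define m where "m = (\<integral>y. y \<partial>N)"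
  define E where "E = (\<integral>y. y\<^sup>2 \<partial>N)"
  have ia: "integrable N (\<lambda>y. (a - y)\<^sup>2)" for a
    using i1 i2 by (simp add: power2_diff)
  have form: "(\<integral>y. (a - y)\<^sup>2 \<partial>N) = (a - m)\<^sup>2 + (E - m\<^sup>2)" for a
  proof -
    have "(\<integral>y. (a - y)\<^sup>2 \<partial>N) = (\<integral>y. a\<^sup>2 - 2 * a * y + y\<^sup>2 \<partial>N)"
      by (rule Bochner_Integration.integral_cong) (auto simp: power2_diff)
    also have "\<dots> = a\<^sup>2 - 2 * a * m + E"
      using i1 i2 by (simp add: m_def E_def prob_space)
    finally show ?thesis by (simp add: power2_diff)
  qed
  have V: "0 \<le> E - m\<^sup>2" using form[of m] integral_nonneg_AE[of "\<lambda>y. (m - y)\<^sup>2" N] by simp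
  then show "(\<integral>y. y \<partial>N)\<^sup>2 \<le> (\<integral>y. y\<^sup>2 \<partial>N)" by (simp add: m_def E_def)
  fix a
  have "(\<integral>\<^sup>+y. ennreal ((a - y)\<^sup>2) \<partial>N) = ennreal (\<integral>y. (a - y)\<^sup>2 \<partial>N)"
    by (rule nn_integral_eq_integral[OF ia]) auto
  also have "\<dots> = ennreal ((a - m)\<^sup>2) + ennreal (E - m\<^sup>2)" using form V by simp
  finally show "(\<integral>\<^sup>+y. ennreal ((a - y)\<^sup>2) \<partial>N) =
           ennreal ((a - (\<integral>y. y \<partial>N))\<^sup>2) + ennreal ((\<integral>y. y\<^sup>2 \<partial>N) - (\<integral>y. y \<partial>N)\<^sup>2)"
    by (simp add: m_def E_def)
qed

lemma kernel_facts:
  fixes PX :: "'a::topological_space measure" and Kx :: "'a \<Rightarrow> real measure"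
  assumes P: "prob_space PX" and sets: "sets PX = sets borel"
    and Kp: "\<And>x. prob_space (Kx x)" and Ks: "\<And>x. sets (Kx x) = sets borel"
    and Km: "\<And>B. B \<in> sets borel \<Longrightarrow> (\<lambda>x. emeasure (Kx x) B) \<in> borel_measurable borel"
    and Ysq: "(\<integral>\<^sup>+x. (\<integral>\<^sup>+y. ennreal (y\<^sup>2) \<partial>Kx x) \<partial>PX) < \<infinity>"
  shows "(\<lambda>x. \<integral>y. y \<partial>Kx x) \<in> borel_measurable PX"
    and "integrable PX (\<lambda>x. (\<integral>y. y \<partial>Kx x)\<^sup>2)"
    and "\<exists>C. \<forall>\<phi>. \<phi> \<in> borel_measurable PX \<longrightarrow> integrable PX (\<lambda>x. (\<phi> x - (\<integral>y. y \<partial>Kx x))\<^sup>2) \<longrightarrow>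
           enn2real (\<integral>\<^sup>+x. (\<integral>\<^sup>+y. ennreal ((\<phi> x - y)\<^sup>2) \<partial>Kx x) \<partial>PX)
             = (\<integral>x. (\<phi> x - (\<integral>y. y \<partial>Kx x))\<^sup>2 \<partial>PX) + C"
proof -
  interpret prob_space PX by (rule P)
  have kern: "Kx \<in> measurable PX (subprob_algebra borel)"
  proof (rule measurable_subprob_algebra)
    show "subprob_space (Kx a)" for a using Kp[of a] by (rule prob_space_imp_subprob_space)
    show "sets (Kx a) = sets borel" for a by (rule Ks)
    show "(\<lambda>a. emeasure (Kx a) A) \<in> borel_measurable PX" if "A \<in> sets borel" for A
      using Km[OF that] measurable_cong_sets[OF sets refl] by blast
  qed
  define f where "f x = (\<integral>y. y \<partial>Kx x)" for x
  define E where "E x = (\<integral>y. y\<^sup>2 \<partial>Kx x)" for x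
  define Q where "Q x = (\<integral>\<^sup>+y. ennreal (y\<^sup>2) \<partial>Kx x)" for x
  have fm: "f \<in> borel_measurable PX"
    unfolding f_def
    by (rule measurable_compose[OF kern integral_measurable_subprob_algebra]) simp
  have Em: "E \<in> borel_measurable PX"
    unfolding E_def
    by (rule measurable_compose[OF kern integral_measurable_subprob_algebra[where f="\<lambda>y::real. y\<^sup>2"]]) simp
  have Qm: "Q \<in> borel_measurable PX"
    unfolding Q_def
    by (rule measurable_compose[OF kern nn_integral_measurable_subprob_algebra]) simp
  have QY: "(\<integral>\<^sup>+x. Q x \<partial>PX) < \<infinity>" using Ysq unfolding Q_def .
  have Qfin: "AE x in PX. Q x \<noteq> \<infinity>"
    by (rule nn_integral_PInf_AE[OF Qm]) (use QY in simp)
  have pk: "AE x in PX. Q x = ennreal (E x) \<and> (f x)\<^sup>2 \<le> E x \<and>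
     (\<forall>a. (\<integral>\<^sup>+y. ennreal ((a - y)\<^sup>2) \<partial>Kx x) = ennreal ((a - f x)\<^sup>2) + ennreal (E x - (f x)\<^sup>2))"
    using Qfin
  proof (rule AE_mp, intro AE_I2 impI)
    fix x assume "Q x \<noteq> \<infinity>"
    then have fin: "(\<integral>\<^sup>+y. ennreal (y\<^sup>2) \<partial>Kx x) < \<infinity>" by (simp add: Q_def less_top)
    note pt = point_kernel[OF Kp Ks fin]
    show "Q x = ennreal (E x) \<and> (f x)\<^sup>2 \<le> E x \<and>
     (\<forall>a. (\<integral>\<^sup>+y. ennreal ((a - y)\<^sup>2) \<partial>Kx x) = ennreal ((a - f x)\<^sup>2) + ennreal (E x - (f x)\<^sup>2))"
      using pt unfolding Q_def E_def f_def by blast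
  qed
  have "AE x in PX. ennreal ((f x)\<^sup>2) \<le> Q x" using pk by eventually_elim (simp add: ennreal_leI)
  then have "(\<integral>\<^sup>+x. ennreal ((f x)\<^sup>2) \<partial>PX) \<le> (\<integral>\<^sup>+x. Q x \<partial>PX)"
    by (rule nn_integral_mono_AE)
  then have fi: "integrable PX (\<lambda>x. (f x)\<^sup>2)"
    by (intro integrableI_nonneg) (use fm QY in auto)
  show "(\<lambda>x. \<integral>y. y \<partial>Kx x) \<in> borel_measurable PX" using fm by (simp add: f_def[abs_def])
  show "integrable PX (\<lambda>x. (\<integral>y. y \<partial>Kx x)\<^sup>2)" using fi by (simp add: f_def[abs_def])
  define V where "V x = ennreal (E x - (f x)\<^sup>2)" for x
  have Vm: "V \<in> borel_measurable PX" unfolding V_def using Em fm by measurable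
  have "AE x in PX. V x \<le> Q x" using pk by eventually_elim (simp add: V_def ennreal_leI)
  then have "(\<integral>\<^sup>+x. V x \<partial>PX) \<le> (\<integral>\<^sup>+x. Q x \<partial>PX)"
    by (rule nn_integral_mono_AE)
  then have Vfin: "(\<integral>\<^sup>+x. V x \<partial>PX) < \<infinity>" using QY by simp
  show "\<exists>C. \<forall>\<phi>. \<phi> \<in> borel_measurable PX \<longrightarrow> integrable PX (\<lambda>x. (\<phi> x - (\<integral>y. y \<partial>Kx x))\<^sup>2) \<longrightarrow>
           enn2real (\<integral>\<^sup>+x. (\<integral>\<^sup>+y. ennreal ((\<phi> x - y)\<^sup>2) \<partial>Kx x) \<partial>PX)
             = (\<integral>x. (\<phi> x - (\<integral>y. y \<partial>Kx x))\<^sup>2 \<partial>PX) + C"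
  proof (intro exI[of _ "enn2real (\<integral>\<^sup>+x. V x \<partial>PX)"] allI impI)
    fix \<phi> assume \<phi>m: "\<phi> \<in> borel_measurable PX" and \<phi>i: "integrable PX (\<lambda>x. (\<phi> x - (\<integral>y. y \<partial>Kx x))\<^sup>2)"
    have \<phi>i': "integrable PX (\<lambda>x. (\<phi> x - f x)\<^sup>2)" using \<phi>i by (simp add: f_def[abs_def])
    have "(\<integral>\<^sup>+x. (\<integral>\<^sup>+y. ennreal ((\<phi> x - y)\<^sup>2) \<partial>Kx x) \<partial>PX) = (\<integral>\<^sup>+x. ennreal ((\<phi> x - f x)\<^sup>2) + V x \<partial>PX)"
      by (rule nn_integral_cong_AE) (use pk in \<open>eventually_elim, simp add: V_def\<close>)
    also have "\<dots> = (\<integral>\<^sup>+x. ennreal ((\<phi> x - f x)\<^sup>2) \<partial>PX) + (\<integral>\<^sup>+x. V x \<partial>PX)"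
      by (rule nn_integral_add) (use \<phi>m fm Vm in measurable)
    also have "(\<integral>\<^sup>+x. ennreal ((\<phi> x - f x)\<^sup>2) \<partial>PX) = ennreal (\<integral>x. (\<phi> x - f x)\<^sup>2 \<partial>PX)"
      by (rule nn_integral_eq_integral[OF \<phi>i']) auto
    finally have "enn2real (\<integral>\<^sup>+x. (\<integral>\<^sup>+y. ennreal ((\<phi> x - y)\<^sup>2) \<partial>Kx x) \<partial>PX)
        = enn2real (ennreal (\<integral>x. (\<phi> x - f x)\<^sup>2 \<partial>PX)) + enn2real (\<integral>\<^sup>+x. V x \<partial>PX)"
      using Vfin by (simp add: enn2real_plus)
    then show "enn2real (\<integral>\<^sup>+x. (\<integral>\<^sup>+y. ennreal ((\<phi> x - y)\<^sup>2) \<partial>Kx x) \<partial>PX)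
             = (\<integral>x. (\<phi> x - (\<integral>y. y \<partial>Kx x))\<^sup>2 \<partial>PX) + enn2real (\<integral>\<^sup>+x. V x \<partial>PX)"
      by (simp add: f_def[abs_def])
  qed
qed


theorem theorem5p1:
  fixes \<psi> :: "real \<Rightarrow> real"
    and PX :: "(real^('i::finite)) measure"
    and Mm :: "'m measure"
    and K :: "'m \<Rightarrow> real^'i \<Rightarrow> real measure"
    and P :: "'w measure"
    and M :: "'w \<Rightarrow> 'm"
    and U :: "('i, 'j::finite) param set"
  assumes analytic: "real_analytic \<psi>"
    and PX_prob: "prob_space PX" and PX_sets: "sets PX = sets borel"
    and supp_compact: "compact (msupport PX)"
    and K_prob: "\<And>m x. m \<in> space Mm \<Longrightarrow> prob_space (K m x)"
    and K_sets: "\<And>m x. m \<in> space Mm \<Longrightarrow> sets (K m x) = sets borel"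
    and K_meas: "\<And>B. B \<in> sets borel \<Longrightarrow>
                   (\<lambda>(m, x). emeasure (K m x) B) \<in> borel_measurable (Mm \<Otimes>\<^sub>M borel)"
    and Y_sq: "\<And>m. m \<in> space Mm \<Longrightarrow>
                 (\<integral>\<^sup>+x. (\<integral>\<^sup>+y. ennreal (y\<^sup>2) \<partial>K m x) \<partial>PX) < \<infinity>"
    and P_prob: "prob_space P"
    and M_meas: "M \<in> measurable P Mm"
    and gauss: "\<And>\<phi>. continuous_on UNIV \<phi> \<Longrightarrow> (\<exists>x\<in>msupport PX. \<phi> x \<noteq> 0) \<Longrightarrow>
                  \<exists>\<mu> \<sigma>. \<sigma> > 0 \<and>
                    distributed P lborel (\<lambda>\<omega>. \<integral>x. \<phi> x * target K (M \<omega>) x \<partial>PX)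
                      (normal_density \<mu> \<sigma>)"
    and dense: "\<And>\<phi> \<delta>. continuous_on UNIV \<phi> \<Longrightarrow> \<delta> > 0 \<Longrightarrow>
                  emeasure P {\<omega> \<in> space P.
                     L2_norm PX (\<lambda>x. target K (M \<omega>) x - \<phi> x) < \<delta>} > 0"
    and U_open: "open U" and U_ne: "U \<noteq> {}"
    and U_sub: "U \<subseteq> EP001 \<psi> (msupport PX)"
  shows "\<exists>A\<in>sets P. emeasure P A > 0 \<and>
           A \<subseteq> {\<omega> \<in> space P. \<exists>\<theta>\<in>U. is_local_min (cost \<psi> PX K (M \<omega>)) \<theta>}"
proof -
  have d\<psi>: "\<And>x. (\<psi> has_real_derivative deriv \<psi> x) (at x)"
    by (rule analytic_deriv[OF analytic])
  have c\<psi>: "continuous_on UNIV \<psi>"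
    by (intro continuous_at_imp_continuous_on ballI DERIV_isCont[OF d\<psi>])
  have rc: "continuous_on UNIV (\<lambda>p. response \<psi> (fst p) (snd p :: real^'i))"
    by (rule response_cont[OF c\<psi>])
  obtain \<theta>0 where \<theta>0U: "\<theta>0 \<in> U" using U_ne by blast
  then have \<theta>0E: "\<theta>0 \<in> EP001 \<psi> (msupport PX)" using U_sub by blast
  obtain r0 where r0: "r0 > 0" and inj: "\<And>\<theta>. 0 < dist \<theta> \<theta>0 \<Longrightarrow> dist \<theta> \<theta>0 < r0 \<Longrightarrow>
      (\<exists>x\<in>msupport PX. response \<psi> \<theta> x \<noteq> response \<psi> \<theta>0 x)"
    using local_inj[OF d\<psi> \<theta>0E] by blast
  obtain e where e: "e > 0" "ball \<theta>0 e \<subseteq> U" using U_open \<theta>0U open_contains_ball by blast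
  define r where "r = min (r0 / 2) (e / 2)"
  have r: "r > 0" using r0 e by (simp add: r_def)
  have cb: "cball \<theta>0 r \<subseteq> U" using e r0 by (auto simp: r_def)
  have sep: "\<exists>x\<in>msupport PX. response \<psi> \<theta> x \<noteq> response \<psi> \<theta>0 x" if "dist \<theta>0 \<theta> = r" for \<theta>
    using inj[of \<theta>] that r r0 by (simp add: dist_commute r_def)
  obtain \<epsilon> where \<epsilon>: "\<epsilon> > 0" and km: "\<And>g. g \<in> borel_measurable PX \<Longrightarrow> integrable PX (\<lambda>x. (g x)\<^sup>2) \<Longrightarrow>
      (\<integral>x. (g x - response \<psi> \<theta>0 x)\<^sup>2 \<partial>PX) < \<epsilon> \<Longrightarrow>
      (\<exists>\<theta>s. dist \<theta>0 \<theta>s < r \<and> (\<exists>e>0. \<forall>\<theta>'. dist \<theta>' \<theta>s < e \<longrightarrow>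
         (\<integral>x. (response \<psi> \<theta>s x - g x)\<^sup>2 \<partial>PX) \<le> (\<integral>x. (response \<psi> \<theta>' x - g x)\<^sup>2 \<partial>PX)))"
    using key_min[OF PX_prob PX_sets supp_compact rc r sep] by blast
  define A where "A = {\<omega> \<in> space P. L2_norm PX (\<lambda>x. target K (M \<omega>) x - response \<psi> \<theta>0 x) < sqrt \<epsilon>}"
  have Apos: "emeasure P A > 0"
    unfolding A_def by (rule dense[OF joint_cont_x[OF rc, of \<theta>0]]) (use \<epsilon> in simp)
  then have Asets: "A \<in> sets P" using emeasure_neq_0_sets by force
  have "A \<subseteq> {\<omega> \<in> space P. \<exists>\<theta>\<in>U. is_local_min (cost \<psi> PX K (M \<omega>)) \<theta>}"
  proof
    fix \<omega> assume \<omega>A: "\<omega> \<in> A"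
    then have \<omega>: "\<omega> \<in> space P" by (simp add: A_def)
    define m where "m = M \<omega>"
    have m: "m \<in> space Mm" using M_meas \<omega> by (simp add: m_def measurable_space)
    have Km: "(\<lambda>x. emeasure (K m x) B) \<in> borel_measurable borel" if "B \<in> sets borel" for B
      using measurable_Pair2[OF K_meas[OF that] m] by simp
    note kf = kernel_facts[OF PX_prob PX_sets K_prob[OF m] K_sets[OF m] Km Y_sq[OF m]]
    define g where "g = target K m"
    have g_eq: "g = (\<lambda>x. \<integral>y. y \<partial>K m x)" by (simp add: g_def target_def[abs_def])
    have gm: "g \<in> borel_measurable PX" using kf(1) g_eq by simp
    have gi: "integrable PX (\<lambda>x. (g x)\<^sup>2)" using kf(2) g_eq by simp
    obtain C where C: "\<And>\<phi>. \<phi> \<in> borel_measurable PX \<Longrightarrow> integrable PX (\<lambda>x. (\<phi> x - g x)\<^sup>2) \<Longrightarrow>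
           enn2real (\<integral>\<^sup>+x. (\<integral>\<^sup>+y. ennreal ((\<phi> x - y)\<^sup>2) \<partial>K m x) \<partial>PX)
             = (\<integral>x. (\<phi> x - g x)\<^sup>2 \<partial>PX) + C"
      using kf(3) g_eq by auto
    have costF: "cost \<psi> PX K m \<theta> = (\<integral>x. (response \<psi> \<theta> x - g x)\<^sup>2 \<partial>PX) + C" for \<theta>
      unfolding cost_def
      by (rule C[OF cont_meas[OF PX_sets joint_cont_x[OF rc]] int_sq_diff[OF PX_prob PX_sets supp_compact joint_cont_x[OF rc] gm gi]])
    have "L2_norm PX (\<lambda>x. g x - response \<psi> \<theta>0 x) < sqrt \<epsilon>" using \<omega>A by (simp add: A_def g_def m_def)
    then have small: "(\<integral>x. (g x - response \<psi> \<theta>0 x)\<^sup>2 \<partial>PX) < \<epsilon>" by (simp add: L2_norm_def)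
    obtain \<theta>s e' where \<theta>s: "dist \<theta>0 \<theta>s < r" and e': "e' > 0" and lm: "\<And>\<theta>'. dist \<theta>' \<theta>s < e' \<Longrightarrow>
         (\<integral>x. (response \<psi> \<theta>s x - g x)\<^sup>2 \<partial>PX) \<le> (\<integral>x. (response \<psi> \<theta>' x - g x)\<^sup>2 \<partial>PX)"
      using km[OF gm gi small] by blast
    have "\<theta>s \<in> U" using cb \<theta>s by auto
    moreover have "is_local_min (cost \<psi> PX K m) \<theta>s"
      unfolding is_local_min_def using e' lm by (auto simp: costF)
    ultimately show "\<omega> \<in> {\<omega> \<in> space P. \<exists>\<theta>\<in>U. is_local_min (cost \<psi> PX K (M \<omega>)) \<theta>}"
      using \<omega> by (auto simp: m_def)
  qed
  with Apos Asets show ?thesis by blast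
qed

end
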